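(* Let $m\ge 2$ be even and let $\{1,\dots,m\}=J_1\cup J_2$ be a partition with $|J_1|=|J_2|=m/2$. Consider the two-stage robust lot-sizing problem $$\min_{\mathbf x}\ \sum_{i=1}^m c_ix_i+\max_{\mathbf h\in\mathcal U}\ \min_{\mathbf y(\mathbf h)\ge\mathbf 0}\ \sum_{i=1}^m\sum_{j=1}^m d_{ij}y_{ij}(\mathbf h)$$ subject to $x_i+\sum_{j=1}^m y_{ji}(\mathbf h)-\sum_{j=1}^m y_{ij}(\mathbf h)\ge h_i$ for all $i\in[m]$ and all $\mathbf h\in\mathcal U$, and $0\le x_i\le K_i$ for all $i\in[m]$, with data $c_i=0$ for $i\in J_1$, $c_i=1$ for $i\in J_2$, $K_i=1$ for all $i$, $d_{ij}=0$ if $i\in J_1,j\in J_2$ and $d_{ij}=+\infty$ otherwise (so any policy sending positive flow $y_{ij}$ on a pair with $d_{ij}=+\infty$ has infinite cost), and $$\mathcal U=\Big\{\mathbf h\in[0,1]^m \;\Big|\; \sum_{i=1}^m h_i\le m/2\Big\}.$$ Let $z_{\sf AR}(\mathcal U)$ be the optimal value of this problem when $\mathbf y(\mathbf h)\in\mathbb R^{m^2}_+$ may depend arbitrarily on $\mathbf h$, and $z_{\sf Aff}(\mathcal U)$ its optimal value when $\mathbf y(\mathbf h)$ is restricted to be affine in $\mathbf h$, i.e., $\mathbf y(\mathbf h)=\mathbf P\mathbf h+\mathbf q$ with $\mathbf P\in\mathbb R^{m^2\times m}$, $\mathbf q\in\mathbb R^{m^2}$ and $\mathbf P\mathbf h+\mathbf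 q\ge\mathbf 0$ for all $\mathbf h\in\mathcal U$. Then $z_{\sf AR}(\mathcal U)=0$ and $z_{\sf Aff}(\mathcal U)=m/2-1$. In particular, the ratio between the optimal affine and optimal adjustable values is unbounded. *)

theory Defs
  imports Complex_Main "HOL-Library.Extended_Real"
begin

text \<open>Vectors are functions nat => real indexed by 1..m; flows y i j, costs d i j :: ereal
  (d i j = infinity allowed; Isabelle's convention infinity * 0 = 0, so a policy has
  infinite cost iff it sends positive flow on a pair with infinite cost).\<close>

definition first_stage_feasible :: "nat \<Rightarrow> (nat \<Rightarrow> real) \<Rightarrow> (nat \<Rightarrow> real) \<Rightarrow> bool" where
  "first_stage_feasible m K x \<longleftrightarrow> (\<forall>i\<in>{1..m}. 0 \<le> x i \<and> x i \<le> K i)"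

definition second_stage_feasible ::
  "nat \<Rightarrow> (nat \<Rightarrow> real) \<Rightarrow> (nat \<Rightarrow> real) \<Rightarrow> (nat \<Rightarrow> nat \<Rightarrow> real) \<Rightarrow> bool" where
  "second_stage_feasible m x h y \<longleftrightarrow>
     (\<forall>i\<in>{1..m}. \<forall>j\<in>{1..m}. 0 \<le> y i j) \<and>
     (\<forall>i\<in>{1..m}. x i + (\<Sum>j=1..m. y j i) - (\<Sum>j=1..m. y i j) \<ge> h i)"

definition flow_cost :: "nat \<Rightarrow> (nat \<Rightarrow> nat \<Rightarrow> ereal) \<Rightarrow> (nat \<Rightarrow> nat \<Rightarrow> real) \<Rightarrow> ereal" where
  "flow_cost m d y = (\<Sum>i=1..m. \<Sum>j=1..m. d i j * ereal (y i j))"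

definition first_stage_cost :: "nat \<Rightarrow> (nat \<Rightarrow> real) \<Rightarrow> (nat \<Rightarrow> real) \<Rightarrow> ereal" where
  "first_stage_cost m c x = ereal (\<Sum>i=1..m. c i * x i)"

definition z_AR ::
  "nat \<Rightarrow> (nat \<Rightarrow> real) \<Rightarrow> (nat \<Rightarrow> real) \<Rightarrow> (nat \<Rightarrow> nat \<Rightarrow> ereal) \<Rightarrow> (nat \<Rightarrow> real) set \<Rightarrow> ereal" where
  "z_AR m c K d U =
     (INF x \<in> {x. first_stage_feasible m K x}.
        first_stage_cost m c x +
        (SUP h\<in>U. INF y \<in> {y. second_stage_feasible m x h y}. flow_cost m d y))"

definition affine_policy ::
  "nat \<Rightarrow> (nat \<Rightarrow> nat \<Rightarrow> nat \<Rightarrow> real) \<Rightarrow> (nat \<Rightarrow> nat \<Rightarrow> real) \<Rightarrow> (nat \<Rightarrow> real) \<Rightarrow> nat \<Rightarrow> nat \<Rightarrow> real" where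
  "affine_policy m P q h = (\<lambda>i j. (\<Sum>k=1..m. P i j k * h k) + q i j)"

definition z_Aff ::
  "nat \<Rightarrow> (nat \<Rightarrow> real) \<Rightarrow> (nat \<Rightarrow> real) \<Rightarrow> (nat \<Rightarrow> nat \<Rightarrow> ereal) \<Rightarrow> (nat \<Rightarrow> real) set \<Rightarrow> ereal" where
  "z_Aff m c K d U =
     (INF (x, P, q) \<in> {(x, P, q). first_stage_feasible m K x \<and>
                          (\<forall>h\<in>U. second_stage_feasible m x h (affine_policy m P q h))}.
        first_stage_cost m c x + (SUP h\<in>U. flow_cost m d (affine_policy m P q h)))"

end

theory Submission
  imports Defs
begin

lemma fc_nonneg:
  assumes d01: "\<forall>i j. d i j = 0 \<or> d i j = \<infinity>"
    and y: "\<forall>i\<in>{1..m}. \<forall>j\<in>{1..m}. 0 \<le> y i j"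
  shows "0 \<le> flow_cost m d y"
  unfolding flow_cost_def
proof (intro sum_nonneg)
  fix i j assume "i \<in> {1..m}" "j \<in> {1..m}"
  then have "0 \<le> y i j" using y by auto
  then show "0 \<le> d i j * ereal (y i j)" using d01[rule_format, of i j] by auto
qed

lemma fc_zero:
  assumes d01: "\<forall>i j. d i j = 0 \<or> d i j = \<infinity>"
    and y: "\<forall>i\<in>{1..m}. \<forall>j\<in>{1..m}. d i j = \<infinity> \<longrightarrow> y i j = 0"
  shows "flow_cost m d y = 0"
  unfolding flow_cost_def
proof (rule sum.neutral, rule ballI)
  fix i assume i: "i \<in> {1..m}"
  show "(\<Sum>j = 1..m. d i j * ereal (y i j)) = 0"
  proof (rule sum.neutral, rule ballI)
    fix j assume "j \<in> {1..m}"
    then show "d i j * ereal (y i j) = 0" using i y d01[rule_format, of i j]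
      by (auto simp: zero_ereal_def)
  qed
qed

lemma fc_inf:
  assumes d01: "\<forall>i j. d i j = 0 \<or> d i j = \<infinity>"
    and y: "\<forall>i\<in>{1..m}. \<forall>j\<in>{1..m}. 0 \<le> y i j"
    and ab: "a \<in> {1..m}" "b \<in> {1..m}" "d a b = \<infinity>" "y a b \<noteq> 0"
  shows "flow_cost m d y = \<infinity>"
proof -
  have "y a b > 0" using y ab by force
  then have "(\<Sum>j = 1..m. d a j * ereal (y a j)) = \<infinity>"
    using ab by (subst sum_Pinfty) auto
  then show ?thesis unfolding flow_cost_def using ab by (subst sum_Pinfty) auto
qed

context
  fixes m :: nat and J1 J2 :: "nat set"
    and c K :: "nat \<Rightarrow> real" and d :: "nat \<Rightarrow> nat \<Rightarrow> ereal" and U :: "(nat \<Rightarrow> real) set"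
  assumes ev: "even m" and m2: "m \<ge> 2"
    and J12: "J1 \<union> J2 = {1..m}" and Jdis: "J1 \<inter> J2 = {}"
    and cJ1: "card J1 = m div 2" and cJ2: "card J2 = m div 2"
    and cdef: "c = (\<lambda>i. if i \<in> J1 then 0 else 1)"
    and Kdef: "K = (\<lambda>i. 1)"
    and ddef: "d = (\<lambda>i j. if i \<in> J1 \<and> j \<in> J2 then 0 else \<infinity>)"
    and Udef: "U = {h. (\<forall>i\<in>{1..m}. 0 \<le> h i \<and> h i \<le> 1) \<and> (\<forall>i. i \<notin> {1..m} \<longrightarrow> h i = 0)
                 \<and> (\<Sum>i=1..m. h i) \<le> real m / 2}"
begin

lemma finJ: "finite J1" "finite J2" "J1 \<subseteq> {1..m}" "J2 \<subseteq> {1..m}"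
  using J12 by (auto intro: finite_subset)

lemma nreal: "real (m div 2) = real m / 2"
  using ev by auto

lemma n1: "m div 2 \<ge> 1" using m2 by auto

lemma d01: "\<forall>i j. d i j = 0 \<or> d i j = \<infinity>"
  using ddef by auto

lemma sum_split: "(\<Sum>i=1..m. f i) = (\<Sum>i\<in>J1. f i) + (\<Sum>i\<in>J2. (f i :: real))"
  using sum.union_disjoint[OF finJ(1,2) Jdis, of f] J12 by simp

lemma zeroU: "(\<lambda>_. 0) \<in> U" using Udef by auto

lemma sum_restrict: "(\<Sum>j=1..m. if j \<in> A then f j else 0) = (\<Sum>j\<in>A. (f j :: real))"
  if "A \<subseteq> {1..m}" for A f
proof -
  have "(\<Sum>j=1..m. if j \<in> A then f j else 0) = (\<Sum>j\<in>{1..m} \<inter> A. f j)"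
    by (simp add: sum.inter_restrict)
  also have "{1..m} \<inter> A = A" using that by auto
  finally show ?thesis .
qed

lemma AR_witness:
  assumes h: "h \<in> U"
  shows "second_stage_feasible m (\<lambda>i. if i\<in>J1 then 1 else 0) h
           (\<lambda>i j. if i\<in>J1 \<and> j\<in>J2 then (1 - h i) * h j / (\<Sum>l\<in>J1. 1 - h l) else 0)"
proof -
  define S where "S = (\<Sum>l\<in>J1. 1 - h l)"
  define H2 where "H2 = (\<Sum>l\<in>J2. h l)"
  have hb: "\<And>i. i \<in> {1..m} \<Longrightarrow> 0 \<le> h i \<and> h i \<le> 1" using h Udef by auto
  have hs: "(\<Sum>i=1..m. h i) \<le> real m / 2" using h Udef by auto
  have S_eq: "S = real m / 2 - (\<Sum>l\<in>J1. h l)"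
    unfolding S_def using cJ1 nreal by (simp add: sum_subtractf)
  have H2S: "H2 \<le> S" using hs sum_split[of h] S_eq H2_def by simp
  have H2nn: "0 \<le> H2" unfolding H2_def using hb finJ by (auto intro!: sum_nonneg)
  have Snn: "0 \<le> S" using H2S H2nn by simp
  show ?thesis unfolding second_stage_feasible_def S_def[symmetric]
  proof (intro conjI ballI)
    fix i j assume "i \<in> {1..m}" "j \<in> {1..m}"
    then show "0 \<le> (if i\<in>J1 \<and> j\<in>J2 then (1 - h i) * h j / S else 0)"
      using hb Snn by auto
  next
    fix i assume i: "i \<in> {1..m}"
    show "h i \<le> (if i\<in>J1 then 1 else 0) + (\<Sum>j=1..m. if j\<in>J1 \<and> i\<in>J2 then (1 - h j) * h i / S else 0)
            - (\<Sum>j=1..m. if i\<in>J1 \<and> j\<in>J2 then (1 - h i) * h j / S else 0)"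
    proof (cases "i \<in> J1")
      case True
      then have iJ2: "i \<notin> J2" using Jdis by auto
      have "(\<Sum>j=1..m. if i\<in>J1 \<and> j\<in>J2 then (1 - h i) * h j / S else 0)
          = (\<Sum>j\<in>J2. (1 - h i) * h j / S)" using True sum_restrict[OF finJ(4)] by simp
      also have "\<dots> = (1 - h i) * (H2 / S)"
        unfolding H2_def by (simp add: sum_distrib_left sum_divide_distrib)
      finally have e: "(\<Sum>j=1..m. if i\<in>J1 \<and> j\<in>J2 then (1 - h i) * h j / S else 0) = (1 - h i) * (H2 / S)" .
      have q: "H2 / S \<le> 1"
        using H2S Snn by (cases "S = 0") (auto simp: divide_le_eq_1)
      have "(1 - h i) * (H2 / S) \<le> (1 - h i) * 1"
        using q hb[OF i] by (intro mult_left_mono) auto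
      then show ?thesis using True iJ2 e by simp
    next
      case False
      then have iJ2: "i \<in> J2" using J12 i by auto
      have "(\<Sum>j=1..m. if j\<in>J1 \<and> i\<in>J2 then (1 - h j) * h i / S else 0)
          = (\<Sum>j\<in>J1. (1 - h j) * h i / S)" using iJ2 sum_restrict[OF finJ(3)] by simp
      also have "\<dots> = S * h i / S"
        unfolding S_def by (simp add: sum_distrib_right sum_divide_distrib)
      also have "\<dots> = h i"
      proof (cases "S = 0")
        case True
        then have "H2 = 0" using H2S H2nn by simp
        then have "h i = 0" unfolding H2_def using hb finJ iJ2
          by (subst (asm) sum_nonneg_eq_0_iff) auto
        then show ?thesis by simp
      qed simp
      finally show ?thesis using False by simp
    qed
  qed
qed

lemma zAR: "z_AR m c K d U = 0"
proof (rule antisym)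
  define x0 where "x0 = (\<lambda>i::nat. if i\<in>J1 then 1 else (0::real))"
  have fx0: "first_stage_feasible m K x0" unfolding first_stage_feasible_def x0_def Kdef by auto
  have c0: "first_stage_cost m c x0 = 0"
    unfolding first_stage_cost_def x0_def cdef
    by (simp add: zero_ereal_def[symmetric] sum.neutral)
  have "(SUP h\<in>U. INF y \<in> {y. second_stage_feasible m x0 h y}. flow_cost m d y) \<le> 0"
  proof (rule SUP_least)
    fix h assume h: "h \<in> U"
    let ?y = "\<lambda>i j. if i\<in>J1 \<and> j\<in>J2 then (1 - h i) * h j / (\<Sum>l\<in>J1. 1 - h l) else 0"
    have "(INF y \<in> {y. second_stage_feasible m x0 h y}. flow_cost m d y) \<le> flow_cost m d ?y"
      by (rule INF_lower) (use AR_witness[OF h] in \<open>simp add: x0_def\<close>)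
    also have "\<dots> = 0" by (rule fc_zero[OF d01]) (auto simp: ddef)
    finally show "(INF y \<in> {y. second_stage_feasible m x0 h y}. flow_cost m d y) \<le> 0" .
  qed
  then have "first_stage_cost m c x0 + (SUP h\<in>U. INF y \<in> {y. second_stage_feasible m x0 h y}. flow_cost m d y) \<le> 0"
    using c0 by simp
  moreover have "z_AR m c K d U \<le> first_stage_cost m c x0 + (SUP h\<in>U. INF y \<in> {y. second_stage_feasible m x0 h y}. flow_cost m d y)"
    unfolding z_AR_def by (rule INF_lower) (use fx0 in simp)
  ultimately show "z_AR m c K d U \<le> 0" by order
next
  show "0 \<le> z_AR m c K d U" unfolding z_AR_def
  proof (rule INF_greatest)
    fix x assume "x \<in> {x. first_stage_feasible m K x}"
    then have fx: "\<forall>i\<in>{1..m}. 0 \<le> x i \<and> x i \<le> 1" unfolding first_stage_feasible_def Kdef by simp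
    have a: "0 \<le> first_stage_cost m c x" unfolding first_stage_cost_def cdef
      using fx by (auto intro!: sum_nonneg)
    have "0 \<le> (INF y \<in> {y. second_stage_feasible m x (\<lambda>_. 0) y}. flow_cost m d y)"
      by (rule INF_greatest) (auto intro!: fc_nonneg[OF d01] simp: second_stage_feasible_def)
    also have "\<dots> \<le> (SUP h\<in>U. INF y \<in> {y. second_stage_feasible m x h y}. flow_cost m d y)"
      by (rule SUP_upper[OF zeroU, of "\<lambda>h. INF y \<in> {y. second_stage_feasible m x h y}. flow_cost m d y", simplified])
    finally show "0 \<le> first_stage_cost m c x + (SUP h\<in>U. INF y \<in> {y. second_stage_feasible m x h y}. flow_cost m d y)"
      using a by (simp add: add_nonneg_nonneg)
  qed
qed

lemma aff_form:
  "affine_policy m (\<lambda>i j k. if i\<in>J1 \<and> j\<in>J2 \<and> k = i then -1/real (m div 2) else 0)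
     (\<lambda>i j. if i\<in>J1 \<and> j\<in>J2 then 1/real (m div 2) else 0) h
   = (\<lambda>i j. if i\<in>J1 \<and> j\<in>J2 then (1 - h i)/real (m div 2) else 0)"
proof (intro ext)
  fix i j
  show "affine_policy m (\<lambda>i j k. if i\<in>J1 \<and> j\<in>J2 \<and> k = i then -1/real (m div 2) else 0)
     (\<lambda>i j. if i\<in>J1 \<and> j\<in>J2 then 1/real (m div 2) else 0) h i j
   = (if i\<in>J1 \<and> j\<in>J2 then (1 - h i)/real (m div 2) else 0)"
  proof (cases "i\<in>J1 \<and> j\<in>J2")
    case True
    then have "i \<in> {1..m}" using finJ by auto
    then have "(\<Sum>k=1..m. (if i\<in>J1 \<and> j\<in>J2 \<and> k = i then -1/real (m div 2) else 0) * h k)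
       = -h i / real (m div 2)" using True
      by (simp add: if_distrib[of "\<lambda>x. x * _"] cong: if_cong)
    then show ?thesis using True unfolding affine_policy_def by (simp add: diff_divide_distrib)
  qed (auto simp: affine_policy_def)
qed

lemma aff_upper: "z_Aff m c K d U \<le> ereal (real m / 2 - 1)"
proof -
  define nn where "nn = real (m div 2)"
  have nn1: "nn \<ge> 1" using n1 nn_def by simp
  define x1 where "x1 = (\<lambda>i::nat. if i\<in>J1 then 1 else 1 - 1/nn)"
  define P1 where "P1 = (\<lambda>i j k::nat. if i\<in>J1 \<and> j\<in>J2 \<and> k = i then -1/nn else 0)"
  define q1 where "q1 = (\<lambda>i j::nat. if i\<in>J1 \<and> j\<in>J2 then 1/nn else 0)"
  have AF: "affine_policy m P1 q1 h = (\<lambda>i j. if i\<in>J1 \<and> j\<in>J2 then (1 - h i)/nn else 0)" for h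
    unfolding P1_def q1_def nn_def by (rule aff_form)
  have fx1: "first_stage_feasible m K x1"
    unfolding first_stage_feasible_def Kdef x1_def using nn1 by auto
  have feas: "second_stage_feasible m x1 h (affine_policy m P1 q1 h)" if h: "h \<in> U" for h
  proof -
    have hb: "\<And>i. i \<in> {1..m} \<Longrightarrow> 0 \<le> h i \<and> h i \<le> 1" using h Udef by auto
    have hs: "(\<Sum>i=1..m. h i) \<le> nn" using h Udef nn_def nreal by auto
    show ?thesis unfolding second_stage_feasible_def AF
    proof (intro conjI ballI)
      fix i j assume "i \<in> {1..m}" "j \<in> {1..m}"
      then show "0 \<le> (if i\<in>J1 \<and> j\<in>J2 then (1 - h i)/nn else 0)"
        using hb nn1 by auto
    next
      fix i assume i: "i \<in> {1..m}"
      show "h i \<le> x1 i + (\<Sum>j=1..m. if j\<in>J1 \<and> i\<in>J2 then (1 - h j)/nn else 0)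
            - (\<Sum>j=1..m. if i\<in>J1 \<and> j\<in>J2 then (1 - h i)/nn else 0)"
      proof (cases "i \<in> J1")
        case True
        then have iJ2: "i \<notin> J2" using Jdis by auto
        have "(\<Sum>j=1..m. if i\<in>J1 \<and> j\<in>J2 then (1 - h i)/nn else 0)
            = (\<Sum>j\<in>J2. (1 - h i)/nn)" using True sum_restrict[OF finJ(4)] by simp
        also have "\<dots> = 1 - h i" using cJ2 nn_def nn1 by simp
        finally show ?thesis using True iJ2 x1_def by simp
      next
        case False
        then have iJ2: "i \<in> J2" using J12 i by auto
        have "(\<Sum>j=1..m. if j\<in>J1 \<and> i\<in>J2 then (1 - h j)/nn else 0)
            = (\<Sum>j\<in>J1. (1 - h j)/nn)" using iJ2 sum_restrict[OF finJ(3)] by simp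
        also have "\<dots> = (nn - (\<Sum>j\<in>J1. h j)) / nn"
          using cJ1 nn_def by (simp add: sum_divide_distrib[symmetric] sum_subtractf)
        finally have e: "(\<Sum>j=1..m. if j\<in>J1 \<and> i\<in>J2 then (1 - h j)/nn else 0) = (nn - (\<Sum>j\<in>J1. h j)) / nn" .
        have "h i \<le> (\<Sum>j\<in>J2. h j)"
          using finJ iJ2 hb by (intro member_le_sum) auto
        then have A: "h i \<le> nn - (\<Sum>j\<in>J1. h j)" using hs sum_split[of h] by simp
        have "0 \<le> (nn - 1) * (1 - h i)" using hb[OF i] nn1 by simp
        then have B: "nn * h i \<le> nn - 1 + h i" by (simp add: algebra_simps)
        define R where "R = nn - (\<Sum>j\<in>J1. h j)"
        have eR: "(1 - 1/nn) + R/nn = (nn - 1 + R)/nn" using nn1 by (simp add: field_simps)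
        have "nn * h i \<le> nn - 1 + R" using A B R_def by simp
        then have "h i \<le> (nn - 1 + R)/nn" using nn1 by (simp add: pos_le_divide_eq mult.commute)
        then have "h i \<le> (1 - 1/nn) + (nn - (\<Sum>j\<in>J1. h j)) / nn" using eR R_def by simp
        then show ?thesis using False iJ2 e x1_def by simp
      qed
    qed
  qed
  have cost0: "flow_cost m d (affine_policy m P1 q1 h) = 0" for h
    unfolding AF by (rule fc_zero[OF d01]) (auto simp: ddef)
  have c1: "first_stage_cost m c x1 = ereal (real m / 2 - 1)"
  proof -
    have "(\<Sum>i=1..m. c i * x1 i) = (\<Sum>i\<in>J1. c i * x1 i) + (\<Sum>i\<in>J2. c i * x1 i)"
      by (rule sum_split)
    also have "(\<Sum>i\<in>J1. c i * x1 i) = 0" unfolding cdef by simp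
    also have "(\<Sum>i\<in>J2. c i * x1 i) = (\<Sum>i\<in>J2. 1 - 1/nn)"
      unfolding cdef x1_def using Jdis by (intro sum.cong) auto
    also have "\<dots> = nn - 1" using cJ2 nn_def nn1 by (simp add: algebra_simps)
    finally show ?thesis unfolding first_stage_cost_def using nn_def nreal by simp
  qed
  have "z_Aff m c K d U \<le> first_stage_cost m c x1 + (SUP h\<in>U. flow_cost m d (affine_policy m P1 q1 h))"
    unfolding z_Aff_def
    by (rule INF_lower2[of "(x1, P1, q1)"]) (use fx1 feas in auto)
  also have "\<dots> = ereal (real m / 2 - 1)"
  proof -
    have "U \<noteq> {}" using zeroU by auto
    then show ?thesis using c1 cost0 by simp
  qed
  finally show ?thesis .
qed

lemma aff_lower_real:
  assumes fx: "first_stage_feasible m K x"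
    and fy: "\<forall>h\<in>U. second_stage_feasible m x h (affine_policy m P q h)"
    and Z: "\<forall>h\<in>U. \<forall>a\<in>{1..m}. \<forall>b\<in>{1..m}. d a b = \<infinity> \<longrightarrow> affine_policy m P q h a b = 0"
  shows "real m / 2 - 1 \<le> (\<Sum>j\<in>J2. x j)"
proof (cases "m div 2 = 1")
  case True
  have "0 \<le> (\<Sum>j\<in>J2. x j)" using fx finJ unfolding first_stage_feasible_def
    by (intro sum_nonneg) auto
  then show ?thesis using True nreal by simp
next
  case False
  then have n2: "m div 2 \<ge> 2" using n1 by simp
  define Y where "Y = affine_policy m P q"
  have xb: "\<And>i. i \<in> {1..m} \<Longrightarrow> 0 \<le> x i \<and> x i \<le> 1" using fx Kdef
    unfolding first_stage_feasible_def by simp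
  have Ynn: "\<And>h a b. h \<in> U \<Longrightarrow> a \<in> {1..m} \<Longrightarrow> b \<in> {1..m} \<Longrightarrow> 0 \<le> Y h a b"
    using fy unfolding second_stage_feasible_def Y_def by blast
  have cons: "\<And>h a. h \<in> U \<Longrightarrow> a \<in> {1..m} \<Longrightarrow>
      h a \<le> x a + (\<Sum>k=1..m. Y h k a) - (\<Sum>k=1..m. Y h a k)"
    using fy unfolding second_stage_feasible_def Y_def by blast
  have Zi: "\<And>h a b. h \<in> U \<Longrightarrow> a \<in> {1..m} \<Longrightarrow> b \<in> {1..m} \<Longrightarrow> \<not> (a \<in> J1 \<and> b \<in> J2) \<Longrightarrow> Y h a b = 0"
    using Z unfolding Y_def ddef by auto
  have inflow0: "(\<Sum>k=1..m. Y h k i) = 0" if "i \<in> J1" "h \<in> U" for i h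
  proof -
    have "i \<in> {1..m}" "i \<notin> J2" using that finJ Jdis by auto
    then show ?thesis using Zi[OF that(2)] by (intro sum.neutral) auto
  qed
  have Key1: "Y h i k = 0" if i: "i \<in> J1" and h: "h \<in> U" "h i = 1" and k: "k \<in> {1..m}" for i h k
  proof -
    have im: "i \<in> {1..m}" using i finJ by auto
    have "(\<Sum>k=1..m. Y h i k) \<le> 0" using cons[OF h(1) im] inflow0[OF i h(1)] xb[OF im] h(2) by simp
    moreover have "\<forall>k\<in>{1..m}. 0 \<le> Y h i k" using Ynn[OF h(1) im] by auto
    moreover have "0 \<le> (\<Sum>k=1..m. Y h i k)" using Ynn[OF h(1) im] by (intro sum_nonneg) auto
    ultimately have "(\<Sum>k=1..m. Y h i k) = 0" by simp
    then have "\<forall>k\<in>{1..m}. Y h i k = 0"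
      using sum_nonneg_eq_0_iff[of "{1..m}" "Y h i"] Ynn[OF h(1) im] by simp
    then show ?thesis using k by auto
  qed
  have "J1 \<noteq> {}" using cJ1 n1 by auto
  then obtain i0 where i0: "i0 \<in> J1" by auto
  have i0m: "i0 \<in> {1..m}" using i0 finJ by auto
  define e1 where "e1 = (\<lambda>l::nat. if l = i0 then (1::real) else 0)"
  have e1U: "e1 \<in> U"
  proof -
    have "(\<Sum>l=1..m. e1 l) = 1" unfolding e1_def using i0m by simp
    then show ?thesis unfolding Udef e1_def using i0m m2 nreal by auto
  qed
  have Ye1: "Y e1 i0 j = P i0 j i0 + q i0 j" for j
  proof -
    have "(\<Sum>l=1..m. P i0 j l * e1 l) = (\<Sum>l=1..m. if l = i0 then P i0 j l else 0)"
      by (rule sum.cong) (auto simp: e1_def)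
    also have "\<dots> = P i0 j i0" using i0m by simp
    finally show ?thesis unfolding Y_def affine_policy_def by simp
  qed
  have Key2b: "P i0 j i0 + q i0 j = 0" if "j \<in> {1..m}" for j
    using Key1[OF i0 e1U _ that] Ye1[of j] by (simp add: e1_def)
  have Key2: "P i0 j k = 0" if j: "j \<in> {1..m}" and k: "k \<in> {1..m}" "k \<noteq> i0" for j k
  proof -
    define e2 where "e2 = (\<lambda>l::nat. if l \<in> {i0, k} then (1::real) else 0)"
    have sub: "{i0, k} \<subseteq> {1..m}" using i0m k by auto
    have "(\<Sum>l=1..m. e2 l) = (\<Sum>l\<in>{i0,k}. 1)" unfolding e2_def by (rule sum_restrict[OF sub])
    also have "\<dots> = 2" using k by simp
    finally have s2: "(\<Sum>l=1..m. e2 l) = 2" .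
    have e2U: "e2 \<in> U"
      unfolding Udef using s2 n2 nreal sub by (auto simp: e2_def)
    have "(\<Sum>l=1..m. P i0 j l * e2 l) = (\<Sum>l=1..m. if l \<in> {i0,k} then P i0 j l else 0)"
      by (rule sum.cong) (auto simp: e2_def)
    also have "\<dots> = (\<Sum>l\<in>{i0,k}. P i0 j l)" by (rule sum_restrict[OF sub])
    also have "\<dots> = P i0 j i0 + P i0 j k" using k by simp
    finally have "Y e2 i0 j = P i0 j i0 + P i0 j k + q i0 j" unfolding Y_def affine_policy_def by simp
    moreover have "Y e2 i0 j = 0" using Key1[OF i0 e2U _ j] by (simp add: e2_def)
    ultimately show ?thesis using Key2b[OF j] by simp
  qed
  have Key3: "Y h i0 j = q i0 j * (1 - h i0)" if j: "j \<in> {1..m}" for h j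
  proof -
    have "(\<Sum>l=1..m. P i0 j l * h l) = (\<Sum>l=1..m. if l = i0 then P i0 j l * h l else 0)"
      by (rule sum.cong) (use Key2[OF j] in auto)
    also have "\<dots> = P i0 j i0 * h i0" using i0m by simp
    finally show ?thesis unfolding Y_def affine_policy_def using Key2b[OF j]
      by (simp add: algebra_simps eq_neg_iff_add_eq_0[symmetric])
  qed
  have Kj: "1 - x j \<le> q i0 j" if j: "j \<in> J2" for j
  proof -
    have jm: "j \<in> {1..m}" using j finJ by auto
    have ji0: "j \<noteq> i0" using j i0 Jdis by auto
    define A where "A = insert j (J1 - {i0})"
    define hs where "hs = (\<lambda>l. if l \<in> A then (1::real) else 0)"
    have Asub: "A \<subseteq> {1..m}" unfolding A_def using jm finJ by auto
    have cA: "card A = m div 2"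
    proof -
      have "card (J1 - {i0}) = m div 2 - 1" using cJ1 i0 by simp
      moreover have "j \<notin> J1 - {i0}" using j Jdis by auto
      ultimately show ?thesis unfolding A_def using finJ n1 by simp
    qed
    have "(\<Sum>l=1..m. hs l) = (\<Sum>l\<in>A. 1)" unfolding hs_def by (rule sum_restrict[OF Asub])
    also have "\<dots> = real m / 2" using cA nreal by simp
    finally have hsum: "(\<Sum>l=1..m. hs l) = real m / 2" .
    have hsU: "hs \<in> U" unfolding Udef using hsum Asub by (auto simp: hs_def)
    have hsj: "hs j = 1" "hs i0 = 0" unfolding hs_def A_def using ji0 by auto
    have c1: "1 \<le> x j + (\<Sum>k=1..m. Y hs k j) - (\<Sum>k=1..m. Y hs j k)"
      using cons[OF hsU jm] hsj by simp
    have "0 \<le> (\<Sum>k=1..m. Y hs j k)" using Ynn[OF hsU jm] by (intro sum_nonneg) auto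
    moreover have "(\<Sum>k=1..m. Y hs k j) = (\<Sum>k=1..m. if k = i0 then Y hs i0 j else 0)"
    proof (rule sum.cong)
      fix k assume k: "k \<in> {1..m}"
      show "Y hs k j = (if k = i0 then Y hs i0 j else 0)"
      proof (cases "k = i0")
        case False
        show ?thesis
        proof (cases "k \<in> J1")
          case True
          then have "hs k = 1" unfolding hs_def A_def using False by auto
          then show ?thesis using Key1[OF True hsU _ jm] False by simp
        qed (use Zi[OF hsU k jm] False in auto)
      qed simp
    qed simp
    moreover have "(\<Sum>k=1..m. if k = i0 then Y hs i0 j else 0) = q i0 j"
      using i0m Key3[OF jm, of hs] hsj by simp
    ultimately show ?thesis using c1 by simp
  qed
  have zU: "(\<lambda>_. 0) \<in> U" by (rule zeroU)
  have Y0: "Y (\<lambda>_. 0) i k = q i k" for i k unfolding Y_def affine_policy_def by simp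
  have "0 \<le> x i0 + 0 - (\<Sum>k=1..m. q i0 k)"
    using cons[OF zU i0m] inflow0[OF i0 zU] Y0 by simp
  then have sq: "(\<Sum>k=1..m. q i0 k) \<le> 1" using xb[OF i0m] by simp
  have "(\<Sum>j\<in>J2. q i0 j) \<le> (\<Sum>k=1..m. q i0 k)"
    by (rule sum_mono2) (use finJ Ynn[OF zU i0m] Y0 in auto)
  moreover have "(\<Sum>j\<in>J2. 1 - x j) \<le> (\<Sum>j\<in>J2. q i0 j)"
    by (rule sum_mono) (rule Kj)
  moreover have "(\<Sum>j\<in>J2. 1 - x j) = real m / 2 - (\<Sum>j\<in>J2. x j)"
    using cJ2 nreal by (simp add: sum_subtractf)
  ultimately show ?thesis using sq by simp
qed

lemma aff_lower: "ereal (real m / 2 - 1) \<le> z_Aff m c K d U"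
  unfolding z_Aff_def
proof (rule INF_greatest)
  fix t assume "t \<in> {(x, P, q). first_stage_feasible m K x \<and>
                    (\<forall>h\<in>U. second_stage_feasible m x h (affine_policy m P q h))}"
  then obtain x P q where t: "t = (x, P, q)" and fx: "first_stage_feasible m K x"
    and fy: "\<forall>h\<in>U. second_stage_feasible m x h (affine_policy m P q h)" by auto
  have Ynn: "\<And>h a b. h \<in> U \<Longrightarrow> \<forall>a\<in>{1..m}. \<forall>b\<in>{1..m}. 0 \<le> affine_policy m P q h a b"
    using fy unfolding second_stage_feasible_def by blast
  have fc: "first_stage_cost m c x = ereal (\<Sum>j\<in>J2. x j)"
  proof -
    have "(\<Sum>i=1..m. c i * x i) = (\<Sum>i\<in>J1. c i * x i) + (\<Sum>i\<in>J2. c i * x i)"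
      by (rule sum_split)
    also have "(\<Sum>i\<in>J1. c i * x i) = 0" unfolding cdef by simp
    also have "(\<Sum>i\<in>J2. c i * x i) = (\<Sum>i\<in>J2. x i)"
      unfolding cdef using Jdis by (intro sum.cong) auto
    finally show ?thesis unfolding first_stage_cost_def by simp
  qed
  let ?S = "(SUP h\<in>U. flow_cost m d (affine_policy m P q h))"
  have "0 \<le> flow_cost m d (affine_policy m P q (\<lambda>_. 0))"
    by (rule fc_nonneg[OF d01 Ynn[OF zeroU]])
  also have "\<dots> \<le> ?S" by (rule SUP_upper[OF zeroU])
  finally have S0: "0 \<le> ?S" .
  show "ereal (real m / 2 - 1) \<le> (case t of (x, P, q) \<Rightarrow> first_stage_cost m c x + (SUP h\<in>U. flow_cost m d (affine_policy m P q h)))"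
  proof (cases "\<exists>h\<in>U. \<exists>a\<in>{1..m}. \<exists>b\<in>{1..m}. d a b = \<infinity> \<and> affine_policy m P q h a b \<noteq> 0")
    case True
    then obtain h a b where h: "h \<in> U" and ab: "a \<in> {1..m}" "b \<in> {1..m}" "d a b = \<infinity>"
      "affine_policy m P q h a b \<noteq> 0" by blast
    have "flow_cost m d (affine_policy m P q h) = \<infinity>"
      by (rule fc_inf[OF d01 Ynn[OF h] ab])
    then have "\<infinity> \<le> ?S" using SUP_upper[OF h, of "\<lambda>h. flow_cost m d (affine_policy m P q h)"] by simp
    then have "?S = \<infinity>" by (simp add: top_unique[unfolded top_ereal_def])
    then show ?thesis using fc t by simp
  next
    case False
    then have Z: "\<forall>h\<in>U. \<forall>a\<in>{1..m}. \<forall>b\<in>{1..m}. d a b = \<infinity> \<longrightarrow> affine_policy m P q h a b = 0"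
      by blast
    have "real m / 2 - 1 \<le> (\<Sum>j\<in>J2. x j)" by (rule aff_lower_real[OF fx fy Z])
    then have "ereal (real m / 2 - 1) \<le> first_stage_cost m c x" using fc by simp
    then have "ereal (real m / 2 - 1) \<le> first_stage_cost m c x + ?S"
      using S0 by (rule add_increasing2[rotated])
    then show ?thesis using t by simp
  qed
qed

end

theorem lemma10:
  fixes m :: nat and J1 J2 :: "nat set"
    and c K :: "nat \<Rightarrow> real" and d :: "nat \<Rightarrow> nat \<Rightarrow> ereal" and U :: "(nat \<Rightarrow> real) set"
  assumes "even m" and "m \<ge> 2"
    and "J1 \<union> J2 = {1..m}" and "J1 \<inter> J2 = {}"
    and "card J1 = m div 2" and "card J2 = m div 2"
    and "c = (\<lambda>i. if i \<in> J1 then 0 else 1)"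
    and "K = (\<lambda>i. 1)"
    and "d = (\<lambda>i j. if i \<in> J1 \<and> j \<in> J2 then 0 else \<infinity>)"
    and "U = {h. (\<forall>i\<in>{1..m}. 0 \<le> h i \<and> h i \<le> 1) \<and> (\<forall>i. i \<notin> {1..m} \<longrightarrow> h i = 0)
                 \<and> (\<Sum>i=1..m. h i) \<le> real m / 2}"
  shows "z_AR m c K d U = 0 \<and> z_Aff m c K d U = ereal (real m / 2 - 1)"
  using zAR[OF assms] aff_upper[OF assms] aff_lower[OF assms] by simp

end
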